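(* Consider the network and protocols described in the context, and let fairMAC$_\infty$ denote fairMAC with $P=Q=\infty$. Let $\tau\propto\sqrt{\sigma}$ and $\sigma\to0$. Then the asymptotic throughput per node and bit-cost of fairMAC$_\infty$ equal the operating point of Round Robin based CoopMAC: $$\mathsf{S}^{*\mathrm{fair}_\infty}=\mathsf{S}^{*\mathrm{coop}}=\frac{1}{\sum_{k\in\mathcal{D}}\frac{1}{R_k}+\sum_{k\in\mathcal{C}}\bigl(\frac{1}{R_{kh_k}}+\frac{1}{R_{h_k}}\bigr)},\qquad \mathsf{B}^{*\mathrm{fair}_\infty}_k=\mathsf{B}^{*\mathrm{coop}}_k=(H_k+1)u_k\mathcal{E}$$ for every node $k$, where $\mathcal{D}$ is the set of nodes without a helper, $\mathcal{C}$ the set of nodes with a helper, $H_k$ the number of nodes whose helper is $k$, and $u_k=1/R_k$ for $k\in\mathcal{D}$, $u_k=1/R_{kh_k}$ for $k\in\mathcal{C}$.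
   Context: Network model: $N$ nodes transmit data to a common access point (AP). For nodes $k,l$, $R_{kl}>0$ is the achievable rate from $k$ to $l$, and $R_k>0$ the rate from $k$ directly to the AP; rates are constant. Each packet carries 1 bit, so a transmission at rate $R$ lasts $1/R$. Node $h$ is the helper $h_k$ of $k$ iff $h=\arg\min_l(1/R_{kl}+1/R_l)$ and $1/R_{kh}+1/R_h<1/R_k$. All nodes transmit at the same power $\mathcal{E}$, are saturated, and access the medium by slotted CSMA with slot length $\sigma$ (normalized by packet size, so $\sigma\to0$ corresponds to packet lengths tending to infinity) and transmit probability $\tau$; a packet is lost iff another node transmits simultaneously; ACKs have negligible duration and are never lost. fairMAC (parameters $P,Q$): a node $k$ with helper $h$ keeps a pending-packet counter $p$; while $p\le P$ it sends its packet to $h$ at rate $R_{kh}$; on successful reception $h$ stores it in an infinite forwarding queue and sends a preACK, and $k$ increments $p$; if $p$ exceeds $P$, $k$ sends directly to the AP. When a helper $h$ wins the medium it sends at rate $R_h$ a joint packet containing one own packet and up to $Q$ packets from its forwarding queue; on success the AP sends a jointACK, $h$ removes those packets, and each source decrements $p$ by its number of forwarded packets. Nodes without helper transmit directly to the AP. Throughput $\mathsf{S}$: long-term own data bits per unit time successfully delivered per node (equal for all nodes). Bit-cost $\mathsf{B}_k=\bar{\mathcal{E}}_k/\mathsf{S}$, with $\bar{\mathcal{E}}_k$ equal to $\mathcal{E}$ times the long-term fraction of time node $k$ transmits (including forwarding). Starred quantities denote limits as $\sigma\to0$ with $\tau\propto\sqrt{\sigma}$. In Round Robin based CoopMAC nodes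 transmit in fixed cyclic order, each helped packet being forwarded immediately, giving per-node throughput $1/\sum_k s_k$ with $s_k$ the travel time of a packet of $k$, and bit-cost $(H_k+1)u_k\mathcal{E}$.
   Formalization: Every helper $h_k$ is assumed to have no helper of its own, so a node in $\mathcal{C}$ is never the helper of another node. The paper assumes this as well. *)

theory Defs
  imports "HOL-Probability.Probability"
begin

text \<open>Network: nodes 0..N-1. R k l = rate from node k to node l, Rd k = rate from k to the AP.
  A helper assignment hlp :: nat => nat option (None = no helper, i.e. node in D;
  Some h = node h is the helper h_k, i.e. node in C).\<close>

definition coop_cost :: "(nat \<Rightarrow> nat \<Rightarrow> real) \<Rightarrow> (nat \<Rightarrow> real) \<Rightarrow> nat \<Rightarrow> nat \<Rightarrow> real" where
  "coop_cost R Rd k l = 1 / R k l + 1 / Rd l"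

definition helper_assignment ::
  "nat \<Rightarrow> (nat \<Rightarrow> nat \<Rightarrow> real) \<Rightarrow> (nat \<Rightarrow> real) \<Rightarrow> (nat \<Rightarrow> nat option) \<Rightarrow> bool" where
  "helper_assignment N R Rd hlp \<longleftrightarrow>
     (\<forall>k<N. case hlp k of
        None \<Rightarrow> (\<forall>l<N. l \<noteq> k \<longrightarrow> \<not> coop_cost R Rd k l < 1 / Rd k)
      | Some h \<Rightarrow> h < N \<and> h \<noteq> k
                 \<and> (\<forall>l<N. l \<noteq> k \<longrightarrow> coop_cost R Rd k h \<le> coop_cost R Rd k l)
                 \<and> coop_cost R Rd k h < 1 / Rd k)"

definition helped_by :: "nat \<Rightarrow> (nat \<Rightarrow> nat option) \<Rightarrow> nat \<Rightarrow> nat set" where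
  "helped_by N hlp k = {j. j < N \<and> hlp j = Some k}"

definition num_helped :: "nat \<Rightarrow> (nat \<Rightarrow> nat option) \<Rightarrow> nat \<Rightarrow> nat" where
  "num_helped N hlp k = card (helped_by N hlp k)"

text \<open>State: p j = pending counter of node j = number of packets of j stored in the
  forwarding queue of its helper.\<close>
type_synonym fstate = "nat \<Rightarrow> nat"

definition tx_dur ::
  "nat \<Rightarrow> (nat \<Rightarrow> nat \<Rightarrow> real) \<Rightarrow> (nat \<Rightarrow> real) \<Rightarrow> (nat \<Rightarrow> nat option) \<Rightarrow> fstate \<Rightarrow> nat \<Rightarrow> real" where
  "tx_dur N R Rd hlp p k =
     (case hlp k of
        Some h \<Rightarrow> 1 / R k h
      | None \<Rightarrow> (1 + real (\<Sum>j\<in>helped_by N hlp k. p j)) / Rd k)"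

definition txset_pmf :: "nat \<Rightarrow> real \<Rightarrow> nat set pmf" where
  "txset_pmf N \<tau> =
     map_pmf (\<lambda>f. {k. k < N \<and> f k}) (Pi_pmf {..<N} False (\<lambda>_. bernoulli_pmf \<tau>))"

text \<open>Outcome of one (virtual) slot given state p and transmitting set T:
  (new state, duration, own bits delivered to the AP per node, transmit time per node).\<close>
definition slot_outcome ::
  "nat \<Rightarrow> (nat \<Rightarrow> nat \<Rightarrow> real) \<Rightarrow> (nat \<Rightarrow> real) \<Rightarrow> (nat \<Rightarrow> nat option) \<Rightarrow> real
   \<Rightarrow> fstate \<Rightarrow> nat set \<Rightarrow> fstate \<times> real \<times> (nat \<Rightarrow> real) \<times> (nat \<Rightarrow> real)" where
  "slot_outcome N R Rd hlp \<sigma> p T =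
     (if T = {} then (p, \<sigma>, \<lambda>_. 0, \<lambda>_. 0)
      else if card T = 1 then
        (let w = the_elem T; d = tx_dur N R Rd hlp p w in
         case hlp w of
           Some h \<Rightarrow> (p(w := Suc (p w)), d, \<lambda>_. 0, \<lambda>k. if k = w then d else 0)
         | None \<Rightarrow> (\<lambda>j. if j \<in> helped_by N hlp w then 0 else p j, d,
                    \<lambda>k. if k = w then 1 else if k \<in> helped_by N hlp w then real (p k) else 0,
                    \<lambda>k. if k = w then d else 0))
      else (p, Max (tx_dur N R Rd hlp p ` T), \<lambda>_. 0,
            \<lambda>k. if k \<in> T then tx_dur N R Rd hlp p k else 0))"

text \<open>Joint distribution after n slots, starting from empty queues:
  (state, elapsed time, cumulative delivered own bits, cumulative transmit time).\<close>
fun fair_run ::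
  "nat \<Rightarrow> (nat \<Rightarrow> nat \<Rightarrow> real) \<Rightarrow> (nat \<Rightarrow> real) \<Rightarrow> (nat \<Rightarrow> nat option) \<Rightarrow> real \<Rightarrow> real
   \<Rightarrow> nat \<Rightarrow> (fstate \<times> real \<times> (nat \<Rightarrow> real) \<times> (nat \<Rightarrow> real)) pmf" where
  "fair_run N R Rd hlp \<sigma> \<tau> 0 = return_pmf (\<lambda>_. 0, 0, \<lambda>_. 0, \<lambda>_. 0)"
| "fair_run N R Rd hlp \<sigma> \<tau> (Suc n) =
     fair_run N R Rd hlp \<sigma> \<tau> n \<bind>
       (\<lambda>(p, t, b, x). map_pmf (\<lambda>(p', d, b', x'). (p', t + d, \<lambda>k. b k + b' k, \<lambda>k. x k + x' k))
                         (map_pmf (slot_outcome N R Rd hlp \<sigma> p) (txset_pmf N \<tau>)))"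

definition exp_time where
  "exp_time N R Rd hlp \<sigma> \<tau> n =
     measure_pmf.expectation (fair_run N R Rd hlp \<sigma> \<tau> n) (\<lambda>s. fst (snd s))"

definition exp_bits where
  "exp_bits N R Rd hlp \<sigma> \<tau> n k =
     measure_pmf.expectation (fair_run N R Rd hlp \<sigma> \<tau> n) (\<lambda>s. fst (snd (snd s)) k)"

definition exp_txtime where
  "exp_txtime N R Rd hlp \<sigma> \<tau> n k =
     measure_pmf.expectation (fair_run N R Rd hlp \<sigma> \<tau> n) (\<lambda>s. snd (snd (snd s)) k)"

definition thr_seq where
  "thr_seq N R Rd hlp \<sigma> \<tau> k = (\<lambda>n. exp_bits N R Rd hlp \<sigma> \<tau> n k / exp_time N R Rd hlp \<sigma> \<tau> n)"

definition fair_S where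
  "fair_S N R Rd hlp \<sigma> \<tau> k = lim (thr_seq N R Rd hlp \<sigma> \<tau> k)"

definition txfrac_seq where
  "txfrac_seq N R Rd hlp \<sigma> \<tau> k = (\<lambda>n. exp_txtime N R Rd hlp \<sigma> \<tau> n k / exp_time N R Rd hlp \<sigma> \<tau> n)"

definition fair_B where
  "fair_B N R Rd hlp \<E> \<sigma> \<tau> k =
     (\<E> * lim (txfrac_seq N R Rd hlp \<sigma> \<tau> k)) / fair_S N R Rd hlp \<sigma> \<tau> k"

definition travel_time where
  "travel_time R Rd hlp k = (case hlp k of None \<Rightarrow> 1 / Rd k | Some h \<Rightarrow> 1 / R k h + 1 / Rd h)"

definition coop_S where
  "coop_S N R Rd hlp = 1 / (\<Sum>k<N. travel_time R Rd hlp k)"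

definition u_rate where
  "u_rate R Rd hlp k = (case hlp k of None \<Rightarrow> 1 / Rd k | Some h \<Rightarrow> 1 / R k h)"

definition coop_B where
  "coop_B N R Rd hlp \<E> k = (real (num_helped N hlp k) + 1) * u_rate R Rd hlp k * \<E>"

end

theory Submission
  imports Defs
begin


lemma expectation_bind_finite:
  fixes f :: "'b \<Rightarrow> real"
  assumes fin: "finite (set_pmf M)" and finK: "\<And>x. x \<in> set_pmf M \<Longrightarrow> finite (set_pmf (K x))"
  shows "measure_pmf.expectation (bind_pmf M K) f =
         measure_pmf.expectation M (\<lambda>x. measure_pmf.expectation (K x) f)"
proof -
  define X where "X = set_pmf M"
  define Y where "Y = (\<Union>x\<in>X. set_pmf (K x))"
  have fX: "finite X" using fin X_def by simp
  have fY: "finite Y" using finK fin unfolding Y_def X_def by auto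
  have pb: "pmf (bind_pmf M K) y = (\<Sum>x\<in>X. pmf (K x) y * pmf M x)" for y
    unfolding pmf_bind X_def
    by (rule integral_measure_pmf_real) (use fin in auto)
  have "measure_pmf.expectation (bind_pmf M K) f = (\<Sum>y\<in>Y. f y * pmf (bind_pmf M K) y)"
    by (rule integral_measure_pmf_real) (use fY in \<open>auto simp: Y_def X_def\<close>)
  also have "\<dots> = (\<Sum>y\<in>Y. \<Sum>x\<in>X. f y * pmf (K x) y * pmf M x)"
    by (simp add: pb sum_distrib_left mult.assoc)
  also have "\<dots> = (\<Sum>x\<in>X. (\<Sum>y\<in>Y. f y * pmf (K x) y) * pmf M x)"
    by (subst sum.swap) (simp add: sum_distrib_right)
  also have "\<dots> = (\<Sum>x\<in>X. measure_pmf.expectation (K x) f * pmf M x)"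
  proof (rule sum.cong[OF refl])
    fix x assume x: "x \<in> X"
    have "measure_pmf.expectation (K x) f = (\<Sum>y\<in>Y. f y * pmf (K x) y)"
      by (rule integral_measure_pmf_real) (use fY x in \<open>auto simp: Y_def\<close>)
    then show "(\<Sum>y\<in>Y. f y * pmf (K x) y) * pmf M x = measure_pmf.expectation (K x) f * pmf M x"
      by simp
  qed
  also have "\<dots> = measure_pmf.expectation M (\<lambda>x. measure_pmf.expectation (K x) f)"
    by (rule integral_measure_pmf_real[symmetric]) (use fX in \<open>auto simp: X_def\<close>)
  finally show ?thesis .
qed

lemma cesaro:
  fixes a :: "nat \<Rightarrow> real"
  assumes "a \<longlonglongrightarrow> A"
  shows "(\<lambda>n. (\<Sum>i<n. a i) / n) \<longlonglongrightarrow> A"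
proof (rule LIMSEQ_I)
  fix r :: real assume r: "r > 0"
  obtain M where M: "\<And>n. n \<ge> M \<Longrightarrow> \<bar>a n - A\<bar> < r/2"
    using LIMSEQ_D[OF assms, of "r/2"] r by (auto simp: dist_real_def)
  define K where "K = (\<Sum>i<M. \<bar>a i - A\<bar>)"
  have K0: "K \<ge> 0" unfolding K_def by (simp add: sum_nonneg)
  obtain L :: nat where L: "L > 2 * K / r" using reals_Archimedean2 by blast
  show "\<exists>no. \<forall>n\<ge>no. norm ((\<Sum>i<n. a i) / real n - A) < r"
  proof (intro exI allI impI)
    fix n assume n: "n \<ge> max (Suc M) L"
    then have npos: "real n > 0" by simp
    have "(\<Sum>i<n. a i) / real n - A = (\<Sum>i<n. a i - A) / real n"
      using npos by (simp add: sum_subtractf field_simps)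
    moreover have "\<bar>\<Sum>i<n. a i - A\<bar> < r * n"
    proof -
      have split: "{..<n} = {..<M} \<union> {M..<n}" using n by auto
      have "\<bar>\<Sum>i<n. a i - A\<bar> \<le> (\<Sum>i<n. \<bar>a i - A\<bar>)" by (rule sum_abs)
      also have "\<dots> = K + (\<Sum>i\<in>{M..<n}. \<bar>a i - A\<bar>)"
        unfolding K_def split by (subst sum.union_disjoint) auto
      also have "(\<Sum>i\<in>{M..<n}. \<bar>a i - A\<bar>) \<le> (\<Sum>i\<in>{M..<n}. r/2)"
        using M by (intro sum_mono) (fastforce intro: less_imp_le)
      also have "\<dots> \<le> r/2 * n" using r n by simp
      also have "K < r/2 * n"
      proof -
        have "2 * K / r < n" using L n by linarith
        then show ?thesis using r by (simp add: field_simps)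
      qed
      finally show ?thesis by linarith
    qed
    ultimately show "norm ((\<Sum>i<n. a i) / real n - A) < r"
      using npos by (simp add: abs_divide field_simps)
  qed
qed


context
  fixes N :: nat and \<tau> :: real
  assumes tau: "0 < \<tau>" "\<tau> < 1"
begin

lemma S_set: "set_pmf (txset_pmf N \<tau>) \<subseteq> Pow {..<N}"
  unfolding txset_pmf_def by auto

lemma S_fin: "finite (set_pmf (txset_pmf N \<tau>))"
  using S_set finite_subset by (metis finite_Pow_iff finite_lessThan)

lemma S_exp: "measure_pmf.expectation (txset_pmf N \<tau>) g = (\<Sum>T\<in>Pow {..<N}. g T * pmf (txset_pmf N \<tau>) T)"
  by (rule integral_measure_pmf_real) (use S_set in auto)

lemma S_pmf:
  assumes T0: "T0 \<subseteq> {..<N}"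
  shows "pmf (txset_pmf N \<tau>) T0 = (\<Prod>k<N. if k \<in> T0 then \<tau> else 1 - \<tau>)"
proof -
  define P where "P = Pi_pmf {..<N} False (\<lambda>_. bernoulli_pmf \<tau>)"
  define g :: "(nat \<Rightarrow> bool) \<Rightarrow> nat set" where "g = (\<lambda>f. {k. k < N \<and> f k})"
  define chi where "chi = (\<lambda>k. k \<in> T0)"
  have sP: "set_pmf P \<subseteq> {f. \<forall>x. x \<notin> {..<N} \<longrightarrow> f x = False}"
    unfolding P_def by (rule set_Pi_pmf_subset) simp
  have gchi: "g chi = T0" using T0 by (auto simp: g_def chi_def)
  have eq: "g -` {T0} \<inter> set_pmf P = {chi} \<inter> set_pmf P"
  proof (intro equalityI subsetI)
    fix f assume f: "f \<in> g -` {T0} \<inter> set_pmf P"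
    then have "f = chi" using sP T0 unfolding g_def chi_def by (auto simp: set_eq_iff fun_eq_iff)
    then show "f \<in> {chi} \<inter> set_pmf P" using f by simp
  qed (use gchi in auto)
  have "pmf (txset_pmf N \<tau>) T0 = measure P (g -` {T0})"
    unfolding txset_pmf_def P_def g_def by (simp add: pmf_map)
  also have "\<dots> = measure P ({chi} \<inter> set_pmf P)"
    by (subst measure_Int_set_pmf[symmetric]) (simp add: eq)
  also have "\<dots> = pmf P chi" by (simp add: measure_Int_set_pmf measure_pmf_single)
  also have "\<dots> = (\<Prod>k<N. pmf (bernoulli_pmf \<tau>) (chi k))"
    unfolding P_def by (subst pmf_Pi') (use T0 in \<open>auto simp: chi_def\<close>)
  also have "\<dots> = (\<Prod>k<N. if k \<in> T0 then \<tau> else 1 - \<tau>)"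
    using tau by (intro prod.cong) (auto simp: chi_def)
  finally show ?thesis .
qed

lemma S_pmf_empty: "pmf (txset_pmf N \<tau>) {} = (1 - \<tau>) ^ N"
  by (subst S_pmf) auto

lemma S_pmf_single: assumes "w < N" shows "pmf (txset_pmf N \<tau>) {w} = \<tau> * (1 - \<tau>) ^ (N - 1)"
proof -
  have "pmf (txset_pmf N \<tau>) {w} = (\<Prod>k<N. if k \<in> {w} then \<tau> else 1 - \<tau>)"
    using assms by (subst S_pmf) auto
  also have "\<dots> = (\<Prod>k\<in>{w}. if k \<in> {w} then \<tau> else 1 - \<tau>) * (\<Prod>k\<in>{..<N}-{w}. if k \<in> {w} then \<tau> else 1 - \<tau>)"
    using assms by (subst prod.subset_diff[of "{w}"]) auto
  also have "\<dots> = \<tau> * (1 - \<tau>) ^ (N - 1)"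
    using assms by simp
  finally show ?thesis .
qed

lemma S_mem: assumes "k < N"
  shows "measure_pmf.expectation (txset_pmf N \<tau>) (\<lambda>T. if k \<in> T then c else 0) = \<tau> * c"
proof -
  have "measure_pmf.expectation (txset_pmf N \<tau>) (\<lambda>T. if k \<in> T then c else 0)
      = measure_pmf.expectation (Pi_pmf {..<N} False (\<lambda>_. bernoulli_pmf \<tau>)) (\<lambda>f. if f k then c else 0)"
    unfolding txset_pmf_def using assms by simp
  also have "\<dots> = measure_pmf.expectation (map_pmf (\<lambda>f. f k) (Pi_pmf {..<N} False (\<lambda>_. bernoulli_pmf \<tau>))) (\<lambda>b. if b then c else 0)"
    by simp
  also have "\<dots> = \<tau> * c" using assms tau by (subst Pi_pmf_component) auto
  finally show ?thesis .
qed

lemma S_sum1: "(\<Sum>T\<in>Pow {..<N}. pmf (txset_pmf N \<tau>) T) = 1"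
  by (rule sum_pmf_eq_1) (use S_set in auto)

end


lemma sum_delta_mult:
  assumes "finite A"
  shows "(\<Sum>T\<in>A. (if T = a then c else 0) * g T) = (if a \<in> A then c * g a else (0::real))"
proof -
  have "(\<Sum>T\<in>A. (if T = a then c else 0) * g T) = (\<Sum>T\<in>A. if T = a then c * g a else 0)"
    by (rule sum.cong) auto
  also have "\<dots> = (if a \<in> A then c * g a else 0)" using assms by (simp add: sum.delta)
  finally show ?thesis .
qed

context
  fixes N :: nat and \<tau> :: real
  assumes tau: "0 < \<tau>" "\<tau> < 1"
begin

lemma split3:
  fixes a :: real and f :: "nat \<Rightarrow> real" and g :: "nat set \<Rightarrow> real"
  shows "(\<Sum>T\<in>Pow {..<N}. ((if T = {} then a else 0) + (if card T = 1 then f (the_elem T) else 0)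
             + (if 2 \<le> card T then g T else 0)) * pmf (txset_pmf N \<tau>) T)
       = a * (1 - \<tau>) ^ N + \<tau> * (1 - \<tau>) ^ (N - 1) * (\<Sum>w<N. f w)
         + (\<Sum>T\<in>Pow {..<N}. (if 2 \<le> card T then g T else 0) * pmf (txset_pmf N \<tau>) T)"
proof -
  let ?p = "pmf (txset_pmf N \<tau>)"
  have A: "(\<Sum>T\<in>Pow {..<N}. (if T = {} then a else 0) * ?p T) = a * (1 - \<tau>) ^ N"
    by (subst sum_delta_mult) (auto simp: S_pmf_empty[OF tau])
  have "(\<Sum>T\<in>Pow {..<N}. (if card T = 1 then f (the_elem T) else 0) * ?p T)
      = (\<Sum>T\<in>Pow {..<N}. if card T = 1 then f (the_elem T) * ?p T else 0)"
    by (rule sum.cong) auto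
  also have "\<dots> = (\<Sum>T\<in>{T\<in>Pow {..<N}. card T = 1}. f (the_elem T) * ?p T)"
    by (subst sum.inter_filter) auto
  also have "{T\<in>Pow {..<N}. card T = 1} = (\<lambda>w. {w}) ` {..<N}"
    by (auto simp: card_1_singleton_iff)
  also have "(\<Sum>T\<in>(\<lambda>w. {w}) ` {..<N}. f (the_elem T) * ?p T) = (\<Sum>w<N. f w * ?p {w})"
    by (subst sum.reindex) (auto simp: inj_on_def)
  also have "\<dots> = (\<Sum>w<N. f w * (\<tau> * (1 - \<tau>) ^ (N - 1)))"
    by (rule sum.cong) (auto simp: S_pmf_single[OF tau])
  also have "\<dots> = \<tau> * (1 - \<tau>) ^ (N - 1) * (\<Sum>w<N. f w)"
    by (simp add: sum_distrib_right mult.commute)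
  finally have B: "(\<Sum>T\<in>Pow {..<N}. (if card T = 1 then f (the_elem T) else 0) * ?p T) = \<tau> * (1 - \<tau>) ^ (N - 1) * (\<Sum>w<N. f w)" .
  show ?thesis
    by (simp only: distrib_right sum.distrib A B)
qed

lemma S_exp_split3:
  assumes "\<And>T. T \<subseteq> {..<N} \<Longrightarrow> h T = (if T = {} then a else 0) + (if card T = 1 then f (the_elem T) else 0)
             + (if 2 \<le> card T then g T else 0)"
  shows "measure_pmf.expectation (txset_pmf N \<tau>) h
       = a * (1 - \<tau>) ^ N + \<tau> * (1 - \<tau>) ^ (N - 1) * (\<Sum>w<N. f w)
         + (\<Sum>T\<in>Pow {..<N}. (if 2 \<le> card T then g T else 0) * pmf (txset_pmf N \<tau>) T)"
  unfolding S_exp[OF tau] using assms by (subst split3[symmetric]) (auto intro!: sum.cong)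

lemma P2_eq: "(\<Sum>T\<in>Pow {..<N}. (if 2 \<le> card T then 1 else 0) * pmf (txset_pmf N \<tau>) T)
   = 1 - (1 - \<tau>) ^ N - \<tau> * (1 - \<tau>) ^ (N - 1) * real N"
proof -
  have "1 = measure_pmf.expectation (txset_pmf N \<tau>) (\<lambda>_. 1::real)" by simp
  also have "\<dots> = 1 * (1 - \<tau>) ^ N + \<tau> * (1 - \<tau>) ^ (N - 1) * (\<Sum>w<N. 1)
         + (\<Sum>T\<in>Pow {..<N}. (if 2 \<le> card T then 1 else 0) * pmf (txset_pmf N \<tau>) T)"
  proof (rule S_exp_split3)
    fix T :: "nat set" assume "T \<subseteq> {..<N}"
    then have "finite T" by (rule finite_subset) simp
    then show "(1::real) = (if T = {} then 1 else 0) + (if card T = 1 then 1 else 0) + (if 2 \<le> card T then 1 else 0)"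
      by (cases "card T") auto
  qed
  finally show ?thesis by simp
qed

lemma S_const_add: "measure_pmf.expectation (txset_pmf N \<tau>) (\<lambda>T. (c::real) + h T) = c + measure_pmf.expectation (txset_pmf N \<tau>) h"
proof -
  have "(\<Sum>T\<in>Pow {..<N}. (c + h T) * pmf (txset_pmf N \<tau>) T)
     = c * (\<Sum>T\<in>Pow {..<N}. pmf (txset_pmf N \<tau>) T) + (\<Sum>T\<in>Pow {..<N}. h T * pmf (txset_pmf N \<tau>) T)"
    by (simp add: distrib_right sum.distrib sum_distrib_left)
  then show ?thesis unfolding S_exp[OF tau] S_sum1[OF tau] by simp
qed

end


locale net =
  fixes N :: nat and R :: "nat \<Rightarrow> nat \<Rightarrow> real" and Rd :: "nat \<Rightarrow> real"
    and hlp :: "nat \<Rightarrow> nat option" and \<sigma> \<tau> :: real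
  assumes tau: "0 < \<tau>" "\<tau> < 1" and sig: "0 < \<sigma>"
    and Rdpos: "\<forall>k<N. Rd k > 0"
    and Rpos: "\<forall>k<N. \<forall>h. hlp k = Some h \<longrightarrow> R k h > 0"
    and hN: "\<forall>k<N. \<forall>h. hlp k = Some h \<longrightarrow> h < N \<and> h \<noteq> k"
    and direct: "\<forall>k<N. \<forall>h. hlp k = Some h \<longrightarrow> hlp h = None"
begin

abbreviation "S \<equiv> txset_pmf N \<tau>"
abbreviation "td \<equiv> tx_dur N R Rd hlp"
abbreviation "so \<equiv> slot_outcome N R Rd hlp \<sigma>"
abbreviation "hb \<equiv> helped_by N hlp"
abbreviation "u \<equiv> u_rate R Rd hlp"

lemma hb_sub: "hb w \<subseteq> {..<N}" by (auto simp: helped_by_def)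
lemma hb_fin: "finite (hb w)" using hb_sub finite_subset by blast
lemma hb_mem: "j \<in> hb w \<Longrightarrow> hlp j = Some w \<and> j < N \<and> hlp w = None"
  using direct by (auto simp: helped_by_def)
lemma hb_C: "hlp w = Some h \<Longrightarrow> hb w = {}"
  using hb_mem by fastforce

lemma td_eq: "td p w = (1 + real (\<Sum>j\<in>hb w. p j)) * u w"
  by (cases "hlp w") (auto simp: tx_dur_def u_rate_def hb_C)

lemma u_pos: "w < N \<Longrightarrow> u w > 0"
  using Rdpos Rpos by (cases "hlp w") (auto simp: u_rate_def)

lemma td_nonneg: "w < N \<Longrightarrow> 0 \<le> td p w"
  unfolding td_eq using u_pos[of w] by (intro mult_nonneg_nonneg add_nonneg_nonneg) (auto simp: sum_nonneg)

lemma td_mono: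
  assumes "w < N" "\<And>j. p j \<le> p' j"
  shows "td p w \<le> td p' w"
  unfolding td_eq using u_pos[OF assms(1)] assms(2)
  by (intro mult_right_mono) (auto intro!: sum_mono)

definition bw :: "fstate \<Rightarrow> nat \<Rightarrow> nat \<Rightarrow> real" where
  "bw p w k = (case hlp w of Some h \<Rightarrow> 0 | None \<Rightarrow> if k = w then 1 else if k \<in> hb w then real (p k) else 0)"

definition sw :: "fstate \<Rightarrow> nat \<Rightarrow> nat \<Rightarrow> real" where
  "sw p w j = (case hlp w of Some h \<Rightarrow> if w = j then 1 else 0 | None \<Rightarrow> if j \<in> hb w then - real (p j) else 0)"

lemma card1: "card T = 1 \<Longrightarrow> T = {the_elem T}"
  using card_1_singleton_iff[of T] by auto

lemma T_cases:
  assumes "T \<subseteq> {..<N}"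
  obtains "T = {}" | w where "T = {w}" | "T \<noteq> {}" "card T \<noteq> 1" "2 \<le> card T"
proof -
  have fT: "finite T" using assms finite_subset by blast
  have "T = {} \<or> card T = 1 \<or> 2 \<le> card T" using fT card_eq_0_iff[of T] by linarith
  then show ?thesis using that card1 by fastforce
qed

lemma dur_dec:
  assumes "T \<subseteq> {..<N}"
  shows "fst (snd (so p T)) = (if T = {} then \<sigma> else 0) + (if card T = 1 then td p (the_elem T) else 0)
             + (if 2 \<le> card T then Max (td p ` T) else 0)"
  using assms
proof (cases rule: T_cases)
  case (2 w)
  show ?thesis unfolding 2 by (simp add: slot_outcome_def Let_def split: option.split)
qed (simp_all add: slot_outcome_def)

lemma bit_dec:
  assumes "T \<subseteq> {..<N}"
  shows "fst (snd (snd (so p T))) k = (if T = {} then 0 else 0) + (if card T = 1 then bw p (the_elem T) k else 0)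
             + (if 2 \<le> card T then 0 else 0)"
  using assms
proof (cases rule: T_cases)
  case (2 w)
  show ?thesis unfolding 2 by (simp add: slot_outcome_def Let_def bw_def split: option.split)
qed (simp_all add: slot_outcome_def)

lemma stp_dec:
  assumes "T \<subseteq> {..<N}"
  shows "real (fst (so p T) j) = real (p j) + ((if T = {} then 0 else 0) + (if card T = 1 then sw p (the_elem T) j else 0)
             + (if 2 \<le> card T then 0 else 0))"
  using assms
proof (cases rule: T_cases)
  case (2 w)
  show ?thesis unfolding 2 by (simp add: slot_outcome_def Let_def sw_def split: option.split)
qed (simp_all add: slot_outcome_def)

lemma txt_dec:
  assumes "T \<subseteq> {..<N}"
  shows "snd (snd (snd (so p T))) k = (if k \<in> T then td p k else 0)"
  using assms
proof (cases rule: T_cases)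
  case (2 w)
  show ?thesis unfolding 2 by (simp add: slot_outcome_def Let_def split: option.split)
qed (simp_all add: slot_outcome_def)

end


context net begin

definition "q = \<tau> * (1 - \<tau>) ^ (N - 1)"
definition "P0 = (1 - \<tau>) ^ N"
definition "P2 = 1 - (1 - \<tau>) ^ N - \<tau> * (1 - \<tau>) ^ (N - 1) * real N"
definition "Coll p = (\<Sum>T\<in>Pow {..<N}. (if 2 \<le> card T then Max (td p ` T) else 0) * pmf S T)"

lemma S_cong:
  fixes f g :: "nat set \<Rightarrow> real"
  assumes "\<And>T. T \<subseteq> {..<N} \<Longrightarrow> f T = g T"
  shows "measure_pmf.expectation S f = measure_pmf.expectation S g"
proof -
  have "(\<Sum>T\<in>Pow {..<N}. f T * pmf S T) = (\<Sum>T\<in>Pow {..<N}. g T * pmf S T)"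
    by (rule sum.cong) (use assms in auto)
  then show ?thesis using S_exp[where g=f, OF tau] S_exp[where g=g, OF tau] by simp
qed

lemma E_dur: "measure_pmf.expectation S (\<lambda>T. fst (snd (so p T))) = \<sigma> * P0 + q * (\<Sum>w<N. td p w) + Coll p"
  unfolding P0_def q_def Coll_def
  by (rule S_exp_split3[OF tau]) (rule dur_dec)

lemma Max_le_sum:
  assumes "T \<subseteq> {..<N}" "T \<noteq> {}"
  shows "0 \<le> Max (td p ` T) \<and> Max (td p ` T) \<le> (\<Sum>w<N. td p w)"
proof -
  have fT: "finite T" using assms finite_subset by blast
  have "Max (td p ` T) \<in> td p ` T" by (rule Max_in) (use fT assms in auto)
  then obtain w where w: "w \<in> T" "Max (td p ` T) = td p w" by auto
  have wN: "w < N" using w assms by auto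
  have "td p w \<le> (\<Sum>w<N. td p w)"
    by (rule member_le_sum) (use wN td_nonneg in auto)
  then show ?thesis using w td_nonneg[OF wN] by simp
qed

lemma Coll_bounds: "0 \<le> Coll p \<and> Coll p \<le> P2 * (\<Sum>w<N. td p w)"
proof
  show "0 \<le> Coll p" unfolding Coll_def
  proof (intro sum_nonneg mult_nonneg_nonneg)
    fix T assume T: "T \<in> Pow {..<N}"
    show "0 \<le> (if 2 \<le> card T then Max (td p ` T) else 0)"
    proof (cases "2 \<le> card T")
      case True
      then have "T \<noteq> {}" by auto
      then show ?thesis using Max_le_sum[of T p] T by simp
    qed simp
  qed simp
  have "Coll p \<le> (\<Sum>T\<in>Pow {..<N}. ((if 2 \<le> card T then 1 else 0) * pmf S T) * (\<Sum>w<N. td p w))"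
    unfolding Coll_def
  proof (intro sum_mono)
    fix T assume T: "T \<in> Pow {..<N}"
    show "(if 2 \<le> card T then Max (td p ` T) else 0) * pmf S T \<le> (if 2 \<le> card T then 1 else 0) * pmf S T * (\<Sum>w<N. td p w)"
    proof (cases "2 \<le> card T")
      case True
      then have "T \<noteq> {}" by auto
      then show ?thesis using True T Max_le_sum[of T p] by (simp add: mult_left_mono mult.commute)
    qed simp
  qed
  also have "\<dots> = P2 * (\<Sum>w<N. td p w)"
    unfolding P2_def P2_eq[OF tau, symmetric] by (simp add: sum_distrib_right)
  finally show "Coll p \<le> P2 * (\<Sum>w<N. td p w)" .
qed

lemma hfacts: "k < N \<Longrightarrow> hlp k = Some h \<Longrightarrow> h < N \<and> h \<noteq> k \<and> hlp h = None"
proof -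
  assume a: "k < N" "hlp k = Some h"
  have "h < N \<and> h \<noteq> k" using hN a by blast
  moreover have "hlp h = None" using direct a by blast
  ultimately show ?thesis by blast
qed

lemma E_bit_D:
  assumes k: "k < N" "hlp k = None"
  shows "measure_pmf.expectation S (\<lambda>T. fst (snd (snd (so p T))) k) = q"
proof -
  have "measure_pmf.expectation S (\<lambda>T. fst (snd (snd (so p T))) k) = 0 * P0 + q * (\<Sum>w<N. bw p w k) + (\<Sum>T\<in>Pow {..<N}. (if 2 \<le> card T then 0 else 0) * pmf S T)"
    unfolding P0_def q_def by (rule S_exp_split3[where a=0 and f="\<lambda>w. bw p w k" and g="\<lambda>T. 0", OF tau]) (rule bit_dec)
  also have "(\<Sum>w<N. bw p w k) = (\<Sum>w<N. if w = k then 1 else 0)"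
  proof (rule sum.cong[OF refl])
    fix w assume "w \<in> {..<N}"
    have nk: "k \<notin> hb w" using k by (auto simp: helped_by_def)
    show "bw p w k = (if w = k then 1 else 0)"
    proof (cases "hlp w")
      case None
      then show ?thesis using nk by (auto simp: bw_def)
    next
      case (Some a)
      then have "w \<noteq> k" using k by auto
      then show ?thesis using Some by (simp add: bw_def)
    qed
  qed
  also have "\<dots> = 1" using k by simp
  finally show ?thesis by simp
qed

lemma E_bit_C:
  assumes k: "k < N" "hlp k = Some h"
  shows "measure_pmf.expectation S (\<lambda>T. fst (snd (snd (so p T))) k) = q * real (p k)"
proof -
  have h: "h < N" "h \<noteq> k" "hlp h = None" using hfacts[OF k] by auto
  have khb: "k \<in> hb h" using k by (simp add: helped_by_def)
  have "measure_pmf.expectation S (\<lambda>T. fst (snd (snd (so p T))) k) = 0 * P0 + q * (\<Sum>w<N. bw p w k) + (\<Sum>T\<in>Pow {..<N}. (if 2 \<le> card T then 0 else 0) * pmf S T)"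
    unfolding P0_def q_def by (rule S_exp_split3[where a=0 and f="\<lambda>w. bw p w k" and g="\<lambda>T. 0", OF tau]) (rule bit_dec)
  also have "(\<Sum>w<N. bw p w k) = (\<Sum>w<N. if w = h then real (p k) else 0)"
  proof (rule sum.cong[OF refl])
    fix w assume "w \<in> {..<N}"
    have iff: "k \<in> hb w \<longleftrightarrow> w = h" using k by (auto simp: helped_by_def)
    show "bw p w k = (if w = h then real (p k) else 0)"
    proof (cases "hlp w")
      case None
      then have "k \<noteq> w" using k by auto
      then show ?thesis using None iff by (simp add: bw_def)
    next
      case (Some a)
      then have "w \<noteq> h" using h by auto
      then show ?thesis using Some by (simp add: bw_def)
    qed
  qed
  also have "\<dots> = real (p k)" using h by simp
  finally show ?thesis by simp
qed

lemma E_stp: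
  assumes j: "j < N" "hlp j = Some h"
  shows "measure_pmf.expectation S (\<lambda>T. real (fst (so p T) j)) = real (p j) + q * (1 - real (p j))"
proof -
  have h: "h < N" "h \<noteq> j" "hlp h = None" using hfacts[OF j] by auto
  have jhb: "j \<in> hb h" using j by (simp add: helped_by_def)
  have "measure_pmf.expectation S (\<lambda>T. real (fst (so p T) j)) =
        measure_pmf.expectation S (\<lambda>T. real (p j) + ((if T = {} then 0 else 0) + (if card T = 1 then sw p (the_elem T) j else 0)
             + (if 2 \<le> card T then 0 else 0)))"
    by (rule S_cong) (rule stp_dec)
  also have "\<dots> = real (p j) + measure_pmf.expectation S (\<lambda>T. (if T = {} then 0 else 0) + (if card T = 1 then sw p (the_elem T) j else 0)
             + (if 2 \<le> card T then 0 else 0))"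
    by (rule S_const_add[OF tau])
  also have "measure_pmf.expectation S (\<lambda>T. (if T = {} then 0 else 0) + (if card T = 1 then sw p (the_elem T) j else 0)
             + (if 2 \<le> card T then 0 else 0)) = 0 * P0 + q * (\<Sum>w<N. sw p w j) + (\<Sum>T\<in>Pow {..<N}. (if 2 \<le> card T then 0 else 0) * pmf S T)"
    unfolding P0_def q_def by (rule S_exp_split3[where a=0 and f="\<lambda>w. sw p w j" and g="\<lambda>T. 0", OF tau]) simp
  also have "(\<Sum>w<N. sw p w j) = (\<Sum>w<N. (if w = j then 1 else 0) + (if w = h then - real (p j) else 0))"
  proof (rule sum.cong[OF refl])
    fix w assume "w \<in> {..<N}"
    have iff: "j \<in> hb w \<longleftrightarrow> w = h" using j by (auto simp: helped_by_def)
    show "sw p w j = (if w = j then 1 else 0) + (if w = h then - real (p j) else 0)"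
    proof (cases "hlp w")
      case None
      then have "j \<noteq> w" using j by auto
      then show ?thesis using None iff by (simp add: sw_def)
    next
      case (Some a)
      then have "w \<noteq> h" using h by auto
      then show ?thesis using Some by (simp add: sw_def)
    qed
  qed
  also have "\<dots> = 1 - real (p j)" using h j by (simp add: sum.distrib)
  finally show ?thesis by simp
qed

lemma E_txt:
  assumes k: "k < N"
  shows "measure_pmf.expectation S (\<lambda>T. snd (snd (snd (so p T))) k) = \<tau> * td p k"
proof -
  have "measure_pmf.expectation S (\<lambda>T. snd (snd (snd (so p T))) k) = measure_pmf.expectation S (\<lambda>T. if k \<in> T then td p k else 0)"
    by (rule S_cong) (rule txt_dec)
  also have "\<dots> = \<tau> * td p k" by (rule S_mem[OF tau k])
  finally show ?thesis .
qed

lemma stp_mono: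
  assumes "T \<subseteq> {..<N}" "\<And>j. p j \<le> p' j"
  shows "fst (so p T) j \<le> fst (so p' T) j"
  using assms(1)
proof (cases rule: T_cases)
  case (2 w)
  show ?thesis unfolding 2 using assms(2) by (simp add: slot_outcome_def Let_def split: option.split)
qed (simp_all add: slot_outcome_def assms(2))

lemma dur_mono:
  assumes T: "T \<subseteq> {..<N}" and pp: "\<And>j. p j \<le> p' j"
  shows "fst (snd (so p T)) \<le> fst (snd (so p' T))"
proof -
  have fT: "finite T" using T finite_subset by blast
  have m: "w \<in> T \<Longrightarrow> td p w \<le> td p' w" for w using td_mono[OF _ pp, of w] T by auto
  have "(if 2 \<le> card T then Max (td p ` T) else 0) \<le> (if 2 \<le> card T then Max (td p' ` T) else 0)"
  proof (cases "2 \<le> card T")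
    case True
    then have ne: "T \<noteq> {}" by auto
    have "Max (td p ` T) \<le> Max (td p' ` T)"
    proof (subst Max_le_iff)
      show "finite (td p ` T)" "td p ` T \<noteq> {}" using fT ne by auto
      show "\<forall>a\<in>td p ` T. a \<le> Max (td p' ` T)"
      proof
        fix a assume "a \<in> td p ` T"
        then obtain w where w: "w \<in> T" "a = td p w" by auto
        have "td p' w \<le> Max (td p' ` T)" by (rule Max_ge) (use fT w in auto)
        then show "a \<le> Max (td p' ` T)" using m[OF w(1)] w(2) by linarith
      qed
    qed
    then show ?thesis using True by simp
  qed simp
  moreover have "(if card T = 1 then td p (the_elem T) else 0) \<le> (if card T = 1 then td p' (the_elem T) else 0)"
  proof (cases "card T = 1")
    case True
    then obtain w where w: "T = {w}" using card1 by blast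
    show ?thesis using m[of w] w by simp
  qed simp
  ultimately show ?thesis unfolding dur_dec[OF T] by linarith
qed

end


context net begin

abbreviation "stp p T \<equiv> fst (so p T)"
abbreviation "fr \<equiv> fair_run N R Rd hlp \<sigma> \<tau>"

primrec Qst :: "nat \<Rightarrow> fstate \<Rightarrow> fstate pmf" where
  "Qst 0 p0 = return_pmf p0"
| "Qst (Suc n) p0 = Qst n p0 \<bind> (\<lambda>p. map_pmf (\<lambda>T. stp p T) S)"

lemma S_fin': "finite (set_pmf S)" by (rule S_fin[OF tau])

lemma Q_fin: "finite (set_pmf (Qst n p0))"
  by (induction n) (auto simp: S_fin')

lemma Q_back: "Qst (Suc n) p0 = S \<bind> (\<lambda>T. Qst n (stp p0 T))"
proof (induction n arbitrary: p0)
  case 0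
  show ?case by (simp add: map_pmf_def bind_return_pmf)
next
  case (Suc n)
  have "Qst (Suc (Suc n)) p0 = (S \<bind> (\<lambda>T. Qst n (stp p0 T))) \<bind> (\<lambda>p. map_pmf (\<lambda>T. stp p T) S)"
    using Suc by simp
  also have "\<dots> = S \<bind> (\<lambda>T. Qst n (stp p0 T) \<bind> (\<lambda>p. map_pmf (\<lambda>T. stp p T) S))"
    by (rule bind_assoc_pmf)
  also have "\<dots> = S \<bind> (\<lambda>T. Qst (Suc n) (stp p0 T))" by simp
  finally show ?case .
qed

lemma EQ_step: "measure_pmf.expectation (Qst (Suc n) p0) (f :: fstate \<Rightarrow> real)
   = measure_pmf.expectation (Qst n p0) (\<lambda>p. measure_pmf.expectation S (\<lambda>T. f (stp p T)))"
  unfolding Qst.simps by (subst expectation_bind_finite) (auto simp: Q_fin S_fin')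

lemma EQ_back: "measure_pmf.expectation (Qst (Suc n) p0) (f :: fstate \<Rightarrow> real)
   = measure_pmf.expectation S (\<lambda>T. measure_pmf.expectation (Qst n (stp p0 T)) f)"
  unfolding Q_back by (rule expectation_bind_finite) (auto simp: Q_fin S_fin')

lemma ES_mono:
  assumes "\<And>T. T \<subseteq> {..<N} \<Longrightarrow> f T \<le> (g T :: real)"
  shows "measure_pmf.expectation S f \<le> measure_pmf.expectation S g"
  unfolding S_exp[where g=f, OF tau] S_exp[where g=g, OF tau]
  by (rule sum_mono) (use assms in \<open>auto intro: mult_right_mono\<close>)

lemma Q_mono:
  assumes G: "\<And>p p'. (\<And>j. p j \<le> p' j) \<Longrightarrow> G p \<le> (G p' :: real)"
  shows "(\<And>j. p0 j \<le> p0' j) \<Longrightarrow> measure_pmf.expectation (Qst n p0) G \<le> measure_pmf.expectation (Qst n p0') G"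
proof (induction n arbitrary: p0 p0')
  case 0
  then show ?case using G by simp
next
  case (Suc n)
  show ?case unfolding EQ_back
  proof (rule ES_mono)
    fix T assume T: "T \<subseteq> {..<N}"
    show "measure_pmf.expectation (Qst n (stp p0 T)) G \<le> measure_pmf.expectation (Qst n (stp p0' T)) G"
      by (rule Suc.IH) (rule stp_mono[OF T Suc.prems])
  qed
qed

lemma Q_inc:
  assumes G: "\<And>p p'. (\<And>j. p j \<le> p' j) \<Longrightarrow> G p \<le> (G p' :: real)"
  shows "measure_pmf.expectation (Qst n (\<lambda>_. 0)) G \<le> measure_pmf.expectation (Qst (Suc n) (\<lambda>_. 0)) G"
proof -
  have "measure_pmf.expectation S (\<lambda>T. measure_pmf.expectation (Qst n (\<lambda>_. 0)) G)
     \<le> measure_pmf.expectation S (\<lambda>T. measure_pmf.expectation (Qst n (stp (\<lambda>_. 0) T)) G)"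
    by (rule ES_mono, rule Q_mono[OF G]) auto
  then show ?thesis unfolding EQ_back by simp
qed

lemma fr_fin: "finite (set_pmf (fr n))"
  by (induction n) (auto simp: S_fin' split_beta)

lemma fr_fst: "map_pmf fst (fr n) = Qst n (\<lambda>_. 0)"
proof (induction n)
  case 0
  then show ?case by simp
next
  case (Suc n)
  have "map_pmf fst (fr (Suc n)) = fr n \<bind> (\<lambda>s. map_pmf (\<lambda>T. stp (fst s) T) S)"
    by (simp add: map_bind_pmf split_beta map_pmf_comp)
  also have "\<dots> = map_pmf fst (fr n) \<bind> (\<lambda>p. map_pmf (\<lambda>T. stp p T) S)"
    by (simp add: bind_map_pmf)
  finally show ?case using Suc by simp
qed

lemma Efr_step: "measure_pmf.expectation (fr (Suc n)) (f :: _ \<Rightarrow> real) =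
   measure_pmf.expectation (fr n) (\<lambda>s. measure_pmf.expectation S (\<lambda>T.
       f (fst (so (fst s) T), fst (snd s) + fst (snd (so (fst s) T)),
          \<lambda>k. fst (snd (snd s)) k + fst (snd (snd (so (fst s) T))) k,
          \<lambda>k. snd (snd (snd s)) k + snd (snd (snd (so (fst s) T))) k)))"
  by (simp add: expectation_bind_finite fr_fin S_fin' split_beta)

lemma Efr_fst: "measure_pmf.expectation (fr n) (\<lambda>s. G (fst s)) = measure_pmf.expectation (Qst n (\<lambda>_. 0)) (G :: _ \<Rightarrow> real)"
  by (simp flip: fr_fst)

lemma fr_add: "measure_pmf.expectation (fr n) (\<lambda>s. (f s :: real) + g s) = measure_pmf.expectation (fr n) f + measure_pmf.expectation (fr n) g"
  by (rule Bochner_Integration.integral_add; rule integrable_measure_pmf_finite; rule fr_fin)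

definition "dd i = measure_pmf.expectation (Qst i (\<lambda>_. 0)) (\<lambda>p. measure_pmf.expectation S (\<lambda>T. fst (snd (so p T))))"
definition "aa k i = measure_pmf.expectation (Qst i (\<lambda>_. 0)) (\<lambda>p. measure_pmf.expectation S (\<lambda>T. fst (snd (snd (so p T))) k))"
definition "xx k i = measure_pmf.expectation (Qst i (\<lambda>_. 0)) (\<lambda>p. measure_pmf.expectation S (\<lambda>T. snd (snd (snd (so p T))) k))"

lemma exp_time_sum: "exp_time N R Rd hlp \<sigma> \<tau> n = (\<Sum>i<n. dd i)"
proof (induction n)
  case 0 then show ?case by (simp add: exp_time_def)
next
  case (Suc n)
  have "exp_time N R Rd hlp \<sigma> \<tau> (Suc n) = measure_pmf.expectation (fr n) (\<lambda>s. fst (snd s) + measure_pmf.expectation S (\<lambda>T. fst (snd (so (fst s) T))))"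
    unfolding exp_time_def Efr_step by (simp add: S_const_add[OF tau])
  also have "\<dots> = exp_time N R Rd hlp \<sigma> \<tau> n + dd n"
    unfolding fr_add exp_time_def dd_def Efr_fst[where G="\<lambda>p. measure_pmf.expectation S (\<lambda>T. fst (snd (so p T)))" and n=n] ..
  finally show ?case using Suc by simp
qed

lemma exp_bits_sum: "exp_bits N R Rd hlp \<sigma> \<tau> n k = (\<Sum>i<n. aa k i)"
proof (induction n)
  case 0 then show ?case by (simp add: exp_bits_def)
next
  case (Suc n)
  have "exp_bits N R Rd hlp \<sigma> \<tau> (Suc n) k = measure_pmf.expectation (fr n) (\<lambda>s. fst (snd (snd s)) k + measure_pmf.expectation S (\<lambda>T. fst (snd (snd (so (fst s) T))) k))"
    unfolding exp_bits_def Efr_step by (simp add: S_const_add[OF tau])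
  also have "\<dots> = exp_bits N R Rd hlp \<sigma> \<tau> n k + aa k n"
    unfolding fr_add exp_bits_def aa_def Efr_fst[where G="\<lambda>p. measure_pmf.expectation S (\<lambda>T. fst (snd (snd (so p T))) k)" and n=n] ..
  finally show ?case using Suc by simp
qed

lemma exp_txtime_sum: "exp_txtime N R Rd hlp \<sigma> \<tau> n k = (\<Sum>i<n. xx k i)"
proof (induction n)
  case 0 then show ?case by (simp add: exp_txtime_def)
next
  case (Suc n)
  have "exp_txtime N R Rd hlp \<sigma> \<tau> (Suc n) k = measure_pmf.expectation (fr n) (\<lambda>s. snd (snd (snd s)) k + measure_pmf.expectation S (\<lambda>T. snd (snd (snd (so (fst s) T))) k))"
    unfolding exp_txtime_def Efr_step by (simp add: S_const_add[OF tau])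
  also have "\<dots> = exp_txtime N R Rd hlp \<sigma> \<tau> n k + xx k n"
    unfolding fr_add exp_txtime_def xx_def Efr_fst[where G="\<lambda>p. measure_pmf.expectation S (\<lambda>T. snd (snd (snd (so p T))) k)" and n=n] ..
  finally show ?case using Suc by simp
qed

end


lemma E_affine:
  fixes f :: "'a \<Rightarrow> real"
  assumes "finite (set_pmf M)"
  shows "measure_pmf.expectation M (\<lambda>x. a + b * f x) = a + b * measure_pmf.expectation M f"
proof -
  have "measure_pmf.expectation M (\<lambda>x. a + b * f x) = measure_pmf.expectation M (\<lambda>x. a) + measure_pmf.expectation M (\<lambda>x. b * f x)"
    by (rule Bochner_Integration.integral_add; rule integrable_measure_pmf_finite; rule assms)
  then show ?thesis by simp
qed

lemma E_sum:
  fixes f :: "'b \<Rightarrow> 'a \<Rightarrow> real"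
  assumes "finite (set_pmf M)"
  shows "measure_pmf.expectation M (\<lambda>x. \<Sum>i\<in>I. f i x) = (\<Sum>i\<in>I. measure_pmf.expectation M (f i))"
  by (rule Bochner_Integration.integral_sum) (rule integrable_measure_pmf_finite[OF assms])

lemma E_cong_fin:
  fixes f g :: "'a \<Rightarrow> real"
  assumes "\<And>x. x \<in> set_pmf M \<Longrightarrow> f x = g x"
  shows "measure_pmf.expectation M f = measure_pmf.expectation M g"
  using assms by (intro integral_cong_AE) (auto simp: AE_measure_pmf_iff)

context net begin

definition "e i = 1 - (1 - q) ^ i"
abbreviation "H w \<equiv> num_helped N hlp w"
definition "TT i = (\<Sum>w<N. (1 + real (H w) * e i) * u w)"
definition "TTinf = (\<Sum>w<N. (1 + real (H w)) * u w)"
definition "CC i = measure_pmf.expectation (Qst i (\<lambda>_. 0)) Coll"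

lemma q_bounds: "0 < q" "q < 1"
proof -
  have "0 < (1 - \<tau>) ^ (N - 1)" using tau by simp
  then show "0 < q" using tau by (simp add: q_def)
  have "(1 - \<tau>) ^ (N - 1) \<le> 1" using tau by (simp add: power_le_one)
  then have "q \<le> \<tau>" using tau unfolding q_def by (simp add: mult_left_le)
  then show "q < 1" using tau by simp
qed

lemma e_bounds: "0 \<le> e i" "e i \<le> 1"
proof -
  have "(1 - q) ^ i \<le> 1" "0 \<le> (1 - q) ^ i" using q_bounds by (auto simp: power_le_one)
  then show "0 \<le> e i" "e i \<le> 1" by (auto simp: e_def)
qed

lemma e_lim: "e \<longlonglongrightarrow> 1"
proof -
  have "(\<lambda>i. (1 - q) ^ i) \<longlonglongrightarrow> 0" by (rule LIMSEQ_power_zero) (use q_bounds in \<open>auto simp: real_norm_def\<close>)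
  then have "(\<lambda>i. 1 - (1 - q) ^ i) \<longlonglongrightarrow> 1 - 0" by (rule tendsto_diff[OF tendsto_const])
  then show ?thesis by (simp add: e_def[abs_def])
qed

lemma Ep:
  assumes j: "j < N" "hlp j = Some h"
  shows "measure_pmf.expectation (Qst i (\<lambda>_. 0)) (\<lambda>p. real (p j)) = e i"
proof (induction i)
  case 0 then show ?case by (simp add: e_def)
next
  case (Suc i)
  have "measure_pmf.expectation (Qst (Suc i) (\<lambda>_. 0)) (\<lambda>p. real (p j))
      = measure_pmf.expectation (Qst i (\<lambda>_. 0)) (\<lambda>p. q + (1 - q) * real (p j))"
    unfolding EQ_step by (rule E_cong_fin) (simp add: E_stp[OF j] algebra_simps)
  also have "\<dots> = q + (1 - q) * e i" using Suc by (simp add: E_affine Q_fin)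
  also have "\<dots> = e (Suc i)" by (simp add: e_def algebra_simps)
  finally show ?case .
qed

lemma Etd:
  assumes w: "w < N"
  shows "measure_pmf.expectation (Qst i (\<lambda>_. 0)) (\<lambda>p. td p w) = (1 + real (H w) * e i) * u w"
proof -
  have "measure_pmf.expectation (Qst i (\<lambda>_. 0)) (\<lambda>p. td p w)
      = measure_pmf.expectation (Qst i (\<lambda>_. 0)) (\<lambda>p. u w + u w * (\<Sum>j\<in>hb w. real (p j)))"
    by (rule E_cong_fin) (simp add: td_eq algebra_simps)
  also have "\<dots> = u w + u w * (\<Sum>j\<in>hb w. measure_pmf.expectation (Qst i (\<lambda>_. 0)) (\<lambda>p. real (p j)))"
    by (simp add: E_affine E_sum Q_fin)
  also have "(\<Sum>j\<in>hb w. measure_pmf.expectation (Qst i (\<lambda>_. 0)) (\<lambda>p. real (p j))) = (\<Sum>j\<in>hb w. e i)"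
  proof (rule sum.cong[OF refl])
    fix j assume "j \<in> hb w"
    then have "j < N" "hlp j = Some w" by (auto simp: helped_by_def)
    then show "measure_pmf.expectation (Qst i (\<lambda>_. 0)) (\<lambda>p. real (p j)) = e i" by (rule Ep)
  qed
  also have "\<dots> = real (H w) * e i" by (simp add: num_helped_def)
  finally show ?thesis by (simp add: algebra_simps)
qed

lemma dd_eq: "dd i = \<sigma> * P0 + q * TT i + CC i"
proof -
  have "dd i = measure_pmf.expectation (Qst i (\<lambda>_. 0)) (\<lambda>p. \<sigma> * P0 + q * (\<Sum>w<N. td p w) + Coll p)"
    unfolding dd_def by (rule E_cong_fin) (rule E_dur)
  also have "\<dots> = measure_pmf.expectation (Qst i (\<lambda>_. 0)) (\<lambda>p. \<sigma> * P0 + q * (\<Sum>w<N. td p w)) + CC i"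
    unfolding CC_def
    by (rule Bochner_Integration.integral_add; rule integrable_measure_pmf_finite; rule Q_fin)
  also have "measure_pmf.expectation (Qst i (\<lambda>_. 0)) (\<lambda>p. \<sigma> * P0 + q * (\<Sum>w<N. td p w)) = \<sigma> * P0 + q * (\<Sum>w<N. measure_pmf.expectation (Qst i (\<lambda>_. 0)) (\<lambda>p. td p w))"
    by (simp add: E_affine E_sum Q_fin)
  also have "(\<Sum>w<N. measure_pmf.expectation (Qst i (\<lambda>_. 0)) (\<lambda>p. td p w)) = TT i"
    unfolding TT_def by (rule sum.cong) (auto simp: Etd)
  finally show ?thesis .
qed

lemma TT_bounds: "0 \<le> TT i" "TT i \<le> TTinf"
proof -
  have u0: "w < N \<Longrightarrow> 0 \<le> u w" for w using u_pos[of w] by simp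
  show "0 \<le> TT i" unfolding TT_def using e_bounds u0 by (intro sum_nonneg mult_nonneg_nonneg) auto
  show "TT i \<le> TTinf" unfolding TT_def TTinf_def
  proof (rule sum_mono)
    fix w assume "w \<in> {..<N}"
    then show "(1 + real (H w) * e i) * u w \<le> (1 + real (H w)) * u w"
      using e_bounds[of i] u0[of w] by (intro mult_right_mono) (auto intro: mult_left_le)
  qed
qed

lemma TT_lim: "TT \<longlonglongrightarrow> TTinf"
proof -
  have "(\<lambda>i. \<Sum>w<N. (1 + real (H w) * e i) * u w) \<longlonglongrightarrow> (\<Sum>w<N. (1 + real (H w) * 1) * u w)"
    by (intro tendsto_intros e_lim)
  then show ?thesis by (simp add: TT_def[abs_def] TTinf_def)
qed

lemma CC_bounds: "0 \<le> CC i" "CC i \<le> P2 * TT i"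
proof -
  show "0 \<le> CC i" unfolding CC_def using Coll_bounds by (intro integral_nonneg_AE) auto
  have "CC i \<le> measure_pmf.expectation (Qst i (\<lambda>_. 0)) (\<lambda>p. P2 * (\<Sum>w<N. td p w))"
    unfolding CC_def using Coll_bounds
    by (intro integral_mono) (auto intro: integrable_measure_pmf_finite Q_fin)
  also have "\<dots> = P2 * TT i"
    by (simp add: E_sum Q_fin Etd TT_def)
  finally show "CC i \<le> P2 * TT i" .
qed

lemma dd_mono: "dd i \<le> dd (Suc i)"
  unfolding dd_def
proof (rule Q_inc)
  fix p p' :: fstate assume pp: "\<And>j. p j \<le> p' j"
  show "measure_pmf.expectation S (\<lambda>T. fst (snd (so p T))) \<le> measure_pmf.expectation S (\<lambda>T. fst (snd (so p' T)))"
    by (rule ES_mono) (rule dur_mono[OF _ pp])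
qed

lemma aa_D: "k < N \<Longrightarrow> hlp k = None \<Longrightarrow> aa k i = q"
  unfolding aa_def by (subst E_cong_fin[where g="\<lambda>_. q"]) (auto simp: E_bit_D)

lemma aa_C: "k < N \<Longrightarrow> hlp k = Some h \<Longrightarrow> aa k i = q * e i"
  unfolding aa_def by (subst E_cong_fin[where g="\<lambda>p. 0 + q * real (p k)"]) (auto simp: E_bit_C E_affine Q_fin Ep)

lemma xx_eq: "k < N \<Longrightarrow> xx k i = \<tau> * ((1 + real (H k) * e i) * u k)"
  unfolding xx_def by (subst E_cong_fin[where g="\<lambda>p. 0 + \<tau> * td p k"]) (auto simp: E_txt E_affine Q_fin Etd)

end


lemma ratio_lim:
  fixes a d :: "nat \<Rightarrow> real"
  assumes "a \<longlonglongrightarrow> A" "d \<longlonglongrightarrow> D" "D \<noteq> 0"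
  shows "(\<lambda>n. (\<Sum>i<n. a i) / (\<Sum>i<n. d i)) \<longlonglongrightarrow> A / D"
proof -
  have "(\<lambda>n. ((\<Sum>i<n. a i) / n) / ((\<Sum>i<n. d i) / n)) \<longlonglongrightarrow> A / D"
    by (rule tendsto_divide[OF cesaro[OF assms(1)] cesaro[OF assms(2)] assms(3)])
  moreover have "\<forall>\<^sub>F n in sequentially. ((\<Sum>i<n. a i) / n) / ((\<Sum>i<n. d i) / n) = (\<Sum>i<n. a i) / (\<Sum>i<n. d i)"
    using eventually_gt_at_top[of "0::nat"] by eventually_elim simp
  ultimately show ?thesis by (rule Lim_transform_eventually)
qed

context net begin

lemma P0_pos: "0 < P0" using tau by (simp add: P0_def)

lemma P2_nonneg: "0 \<le> P2"
proof -
  have "0 \<le> (\<Sum>T\<in>Pow {..<N}. (if 2 \<le> card T then 1 else 0) * pmf S T)"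
    by (intro sum_nonneg) auto
  then show ?thesis unfolding P2_def P2_eq[OF tau] .
qed

lemma dd_lim: "\<exists>D. dd \<longlonglongrightarrow> D \<and> \<sigma> * P0 + q * TTinf \<le> D \<and> D \<le> \<sigma> * P0 + q * TTinf + P2 * TTinf"
proof -
  have inc: "incseq dd" by (rule incseq_SucI) (rule dd_mono)
  have bnd: "\<forall>i. dd i \<le> \<sigma> * P0 + q * TTinf + P2 * TTinf"
  proof
    fix i
    have "q * TT i \<le> q * TTinf" using q_bounds TT_bounds by (intro mult_left_mono) auto
    moreover have "CC i \<le> P2 * TTinf"
      using CC_bounds(2)[of i] mult_left_mono[OF TT_bounds(2)[of i] P2_nonneg] by linarith
    ultimately show "dd i \<le> \<sigma> * P0 + q * TTinf + P2 * TTinf" unfolding dd_eq by linarith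
  qed
  obtain D where D: "dd \<longlonglongrightarrow> D" using incseq_convergent[OF inc bnd] by blast
  have CCl: "CC \<longlonglongrightarrow> D - \<sigma> * P0 - q * TTinf"
  proof -
    have "(\<lambda>i. dd i - \<sigma> * P0 - q * TT i) \<longlonglongrightarrow> D - \<sigma> * P0 - q * TTinf"
      by (intro tendsto_intros D TT_lim)
    moreover have "(\<lambda>i. dd i - \<sigma> * P0 - q * TT i) = CC" by (auto simp: dd_eq)
    ultimately show ?thesis by simp
  qed
  have "0 \<le> D - \<sigma> * P0 - q * TTinf"
    by (rule LIMSEQ_le_const[OF CCl]) (use CC_bounds in auto)
  moreover have "D - \<sigma> * P0 - q * TTinf \<le> P2 * TTinf"
  proof (rule LIMSEQ_le[OF CCl])
    show "(\<lambda>i. P2 * TT i) \<longlonglongrightarrow> P2 * TTinf" by (intro tendsto_intros TT_lim)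
    show "\<exists>N. \<forall>n\<ge>N. CC n \<le> P2 * TT n" using CC_bounds by auto
  qed
  ultimately show ?thesis using D by (intro exI[of _ D]) auto
qed

lemma aa_lim: assumes k: "k < N" shows "aa k \<longlonglongrightarrow> q"
proof (cases "hlp k")
  case None
  have "aa k = (\<lambda>_. q)" by (rule ext) (rule aa_D[OF k None])
  then show ?thesis by simp
next
  case (Some h)
  have "(\<lambda>i. q * e i) \<longlonglongrightarrow> q * 1" by (intro tendsto_intros e_lim)
  moreover have "aa k = (\<lambda>i. q * e i)" by (rule ext) (rule aa_C[OF k Some])
  ultimately show ?thesis by simp
qed

lemma xx_lim: assumes k: "k < N" shows "xx k \<longlonglongrightarrow> \<tau> * ((1 + real (H k)) * u k)"
proof -
  have "(\<lambda>i. \<tau> * ((1 + real (H k) * e i) * u k)) \<longlonglongrightarrow> \<tau> * ((1 + real (H k) * 1) * u k)"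
    by (intro tendsto_intros e_lim)
  moreover have "xx k = (\<lambda>i. \<tau> * ((1 + real (H k) * e i) * u k))" by (rule ext) (rule xx_eq[OF k])
  ultimately show ?thesis by simp
qed

theorem net_main:
  "\<exists>D. \<sigma> * P0 + q * TTinf \<le> D \<and> D \<le> \<sigma> * P0 + q * TTinf + P2 * TTinf \<and>
     (\<forall>k<N. convergent (thr_seq N R Rd hlp \<sigma> \<tau> k) \<and> convergent (txfrac_seq N R Rd hlp \<sigma> \<tau> k)
        \<and> fair_S N R Rd hlp \<sigma> \<tau> k = q / D
        \<and> (\<forall>E. fair_B N R Rd hlp E \<sigma> \<tau> k = E * (\<tau> * ((1 + real (H k)) * u k)) / q))"
proof -
  obtain D where D: "dd \<longlonglongrightarrow> D" "\<sigma> * P0 + q * TTinf \<le> D" "D \<le> \<sigma> * P0 + q * TTinf + P2 * TTinf"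
    using dd_lim by blast
  have "0 \<le> q * TTinf" using q_bounds TT_bounds[of 0] by (intro mult_nonneg_nonneg) linarith+
  then have Dpos: "0 < D" using D(2) sig P0_pos by (smt (verit) mult_pos_pos)
  have "\<forall>k<N. convergent (thr_seq N R Rd hlp \<sigma> \<tau> k) \<and> convergent (txfrac_seq N R Rd hlp \<sigma> \<tau> k)
        \<and> fair_S N R Rd hlp \<sigma> \<tau> k = q / D
        \<and> (\<forall>E. fair_B N R Rd hlp E \<sigma> \<tau> k = E * (\<tau> * ((1 + real (H k)) * u k)) / q)"
  proof (intro allI impI)
    fix k assume k: "k < N"
    have thr: "thr_seq N R Rd hlp \<sigma> \<tau> k \<longlonglongrightarrow> q / D"
      unfolding thr_seq_def exp_bits_sum exp_time_sum
      by (rule ratio_lim[OF aa_lim[OF k] D(1)]) (use Dpos in simp)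
    have txf: "txfrac_seq N R Rd hlp \<sigma> \<tau> k \<longlonglongrightarrow> \<tau> * ((1 + real (H k)) * u k) / D"
      unfolding txfrac_seq_def exp_txtime_sum exp_time_sum
      by (rule ratio_lim[OF xx_lim[OF k] D(1)]) (use Dpos in simp)
    have S: "fair_S N R Rd hlp \<sigma> \<tau> k = q / D" unfolding fair_S_def using thr by (rule limI)
    have L: "lim (txfrac_seq N R Rd hlp \<sigma> \<tau> k) = \<tau> * ((1 + real (H k)) * u k) / D" by (rule limI[OF txf])
    have B: "fair_B N R Rd hlp E \<sigma> \<tau> k = E * (\<tau> * ((1 + real (H k)) * u k)) / q" for E
      unfolding fair_B_def S L using Dpos q_bounds by (simp add: field_simps)
    show "convergent (thr_seq N R Rd hlp \<sigma> \<tau> k) \<and> convergent (txfrac_seq N R Rd hlp \<sigma> \<tau> k)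
        \<and> fair_S N R Rd hlp \<sigma> \<tau> k = q / D
        \<and> (\<forall>E. fair_B N R Rd hlp E \<sigma> \<tau> k = E * (\<tau> * ((1 + real (H k)) * u k)) / q)"
      using thr txf S B by (auto simp: convergent_def)
  qed
  then show ?thesis using D by blast
qed

lemma TTinf_eq: "TTinf = (\<Sum>k<N. travel_time R Rd hlp k)"
proof -
  have "TTinf = (\<Sum>w<N. u w) + (\<Sum>w<N. real (H w) * u w)"
    unfolding TTinf_def by (simp add: distrib_right sum.distrib)
  also have "(\<Sum>w<N. real (H w) * u w) = (\<Sum>w<N. \<Sum>j<N. if hlp j = Some w then u w else 0)"
  proof (rule sum.cong[OF refl])
    fix w
    have eqs: "hb w = {j\<in>{..<N}. hlp j = Some w}" by (auto simp: helped_by_def)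
    have "(\<Sum>j<N. if hlp j = Some w then u w else 0) = (\<Sum>j\<in>{j\<in>{..<N}. hlp j = Some w}. u w)"
      by (rule sum.inter_filter[symmetric]) simp
    also have "\<dots> = real (H w) * u w" unfolding num_helped_def eqs[symmetric] by simp
    finally show "real (H w) * u w = (\<Sum>j<N. if hlp j = Some w then u w else 0)" by simp
  qed
  also have "\<dots> = (\<Sum>j<N. \<Sum>w<N. if hlp j = Some w then u w else 0)" by (rule sum.swap)
  also have "\<dots> = (\<Sum>j<N. case hlp j of None \<Rightarrow> 0 | Some h \<Rightarrow> 1 / Rd h)"
  proof (rule sum.cong[OF refl])
    fix j assume j: "j \<in> {..<N}"
    show "(\<Sum>w<N. if hlp j = Some w then u w else 0) = (case hlp j of None \<Rightarrow> 0 | Some h \<Rightarrow> 1 / Rd h)"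
    proof (cases "hlp j")
      case (Some h)
      have h: "h < N" "hlp h = None" using hfacts[of j h] j Some by auto
      have "(\<Sum>w<N. if hlp j = Some w then u w else 0) = (\<Sum>w<N. if w = h then u h else 0)"
        by (rule sum.cong) (auto simp: Some)
      also have "\<dots> = u h" using h by simp
      finally show ?thesis using Some h by (simp add: u_rate_def)
    qed simp
  qed
  also have "(\<Sum>w<N. u w) + (\<Sum>j<N. case hlp j of None \<Rightarrow> 0 | Some h \<Rightarrow> 1 / Rd h) = (\<Sum>k<N. travel_time R Rd hlp k)"
    unfolding sum.distrib[symmetric] by (rule sum.cong) (auto simp: travel_time_def u_rate_def split: option.split)
  finally show ?thesis .
qed

end


context net begin
corollary net_explicit:
  "\<exists>D. \<sigma> * (1 - \<tau>) ^ N + \<tau> * (1 - \<tau>) ^ (N - 1) * (\<Sum>k<N. travel_time R Rd hlp k) \<le> D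
     \<and> D \<le> \<sigma> * (1 - \<tau>) ^ N + \<tau> * (1 - \<tau>) ^ (N - 1) * (\<Sum>k<N. travel_time R Rd hlp k)
            + (1 - (1 - \<tau>) ^ N - \<tau> * (1 - \<tau>) ^ (N - 1) * real N) * (\<Sum>k<N. travel_time R Rd hlp k)
     \<and> (\<forall>k<N. convergent (thr_seq N R Rd hlp \<sigma> \<tau> k) \<and> convergent (txfrac_seq N R Rd hlp \<sigma> \<tau> k)
        \<and> fair_S N R Rd hlp \<sigma> \<tau> k = \<tau> * (1 - \<tau>) ^ (N - 1) / D
        \<and> (\<forall>E. fair_B N R Rd hlp E \<sigma> \<tau> k = E * (\<tau> * ((1 + real (num_helped N hlp k)) * u_rate R Rd hlp k)) / (\<tau> * (1 - \<tau>) ^ (N - 1))))"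
  using net_main unfolding TTinf_eq q_def P0_def P2_def .
end

lemma ha_Some:
  assumes "helper_assignment N R Rd hlp" "k < N" "hlp k = Some h"
  shows "h < N \<and> h \<noteq> k"
proof -
  from assms(1) have "\<forall>k<N. case hlp k of
        None \<Rightarrow> (\<forall>l<N. l \<noteq> k \<longrightarrow> \<not> coop_cost R Rd k l < 1 / Rd k)
      | Some h \<Rightarrow> h < N \<and> h \<noteq> k
                 \<and> (\<forall>l<N. l \<noteq> k \<longrightarrow> coop_cost R Rd k h \<le> coop_cost R Rd k l)
                 \<and> coop_cost R Rd k h < 1 / Rd k" unfolding helper_assignment_def .
  then have "case hlp k of
        None \<Rightarrow> (\<forall>l<N. l \<noteq> k \<longrightarrow> \<not> coop_cost R Rd k l < 1 / Rd k)
      | Some h \<Rightarrow> h < N \<and> h \<noteq> k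
                 \<and> (\<forall>l<N. l \<noteq> k \<longrightarrow> coop_cost R Rd k h \<le> coop_cost R Rd k l)
                 \<and> coop_cost R Rd k h < 1 / Rd k" using assms(2) by blast
  then show ?thesis using assms(3) by simp
qed

lemma travel_pos:
  assumes "\<forall>k<N. \<forall>l<N. k \<noteq> l \<longrightarrow> R k l > 0" "\<forall>k<N. Rd k > 0"
    and "helper_assignment N R Rd hlp" and "k < N"
  shows "travel_time R Rd hlp k > 0"
proof (cases "hlp k")
  case None then show ?thesis using assms by (simp add: travel_time_def)
next
  case (Some h)
  then have h: "h < N" "h \<noteq> k" using ha_Some[OF assms(3,4)] by auto
  then have "R k h > 0" "Rd h > 0" using assms(1,2,4) by auto
  then show ?thesis using Some by (auto simp: travel_time_def intro!: add_pos_pos)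
qed

lemma alg_lo: "0 < (t::real) \<Longrightarrow> 0 < Y \<Longrightarrow> (s * X + t * Y * T) / (t * Y) = s / t * (X / Y) + T"
  by (simp add: field_simps)

lemma alg_hi: "0 < (t::real) \<Longrightarrow> 0 < Y \<Longrightarrow> (s * X + t * Y * T + Z * T) / (t * Y) = s / t * (X / Y) + T + Z / (t * Y) * T"
  by (simp add: field_simps)

lemma alg_Z: "0 < (t::real) \<Longrightarrow> 0 < Y \<Longrightarrow> Z = t * (W - n * Y) \<Longrightarrow> Z / (t * Y) = (W - n * Y) / Y"
  by simp

lemma alg_sq: "0 < (s::real) \<Longrightarrow> 0 < c \<Longrightarrow> s / (c * sqrt s) = sqrt s / c"
proof -
  assume s: "0 < s" and c: "0 < c"
  have "s = sqrt s * sqrt s" using s by simp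
  then have "s / (c * sqrt s) = sqrt s * sqrt s / (c * sqrt s)" by simp
  also have "\<dots> = sqrt s / c" by (rule nonzero_mult_divide_mult_cancel_right) (use s in simp)
  finally show ?thesis .
qed

lemma diffpow: "1 - (1 - t) ^ N - t * (1 - t) ^ (N - 1) * real N = t * ((\<Sum>i<N. (1 - (t::real)) ^ i) - real N * (1 - t) ^ (N - 1))"
proof -
  have "1 - (1 - t) ^ N = (1 - (1 - t)) * (\<Sum>i<N. (1 - t) ^ i)" by (rule one_diff_power_eq)
  then show ?thesis by (simp add: algebra_simps)
qed


theorem proposition3:
  fixes N :: nat and R :: "nat \<Rightarrow> nat \<Rightarrow> real" and Rd :: "nat \<Rightarrow> real"
    and hlp :: "nat \<Rightarrow> nat option" and \<E> c :: real
  assumes rates_pos: "\<forall>k<N. \<forall>l<N. k \<noteq> l \<longrightarrow> R k l > 0" "\<forall>k<N. Rd k > 0"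
    and helpers: "helper_assignment N R Rd hlp"
    and helpers_direct: "\<forall>k<N. \<forall>h. hlp k = Some h \<longrightarrow> hlp h = None"
    and power: "\<E> > 0"
    and c_pos: "c > 0"
  shows "coop_S N R Rd hlp =
           1 / ((\<Sum>k\<in>{k. k < N \<and> hlp k = None}. 1 / Rd k)
                + (\<Sum>k\<in>{k. k < N \<and> hlp k \<noteq> None}. 1 / R k (the (hlp k)) + 1 / Rd (the (hlp k))))
       \<and> (\<forall>k<N.
            (\<forall>\<^sub>F \<sigma> in at_right 0. convergent (thr_seq N R Rd hlp \<sigma> (c * sqrt \<sigma>) k)
                                   \<and> convergent (txfrac_seq N R Rd hlp \<sigma> (c * sqrt \<sigma>) k))
          \<and> ((\<lambda>\<sigma>. fair_S N R Rd hlp \<sigma> (c * sqrt \<sigma>) k) \<longlongrightarrow> coop_S N R Rd hlp) (at_right 0)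
          \<and> ((\<lambda>\<sigma>. fair_B N R Rd hlp \<E> \<sigma> (c * sqrt \<sigma>) k) \<longlongrightarrow> coop_B N R Rd hlp \<E> k) (at_right 0)
          \<and> coop_B N R Rd hlp \<E> k = (real (num_helped N hlp k) + 1) * u_rate R Rd hlp k * \<E>)"
proof -
  define Tt where "Tt = (\<Sum>k<N. travel_time R Rd hlp k)"
  have hN: "\<forall>k<N. \<forall>h. hlp k = Some h \<longrightarrow> h < N \<and> h \<noteq> k"
    using ha_Some[OF helpers] by blast
  have Rpos: "\<forall>k<N. \<forall>h. hlp k = Some h \<longrightarrow> R k h > 0" using hN rates_pos(1) by blast
  have part1: "coop_S N R Rd hlp =
           1 / ((\<Sum>k\<in>{k. k < N \<and> hlp k = None}. 1 / Rd k)
                + (\<Sum>k\<in>{k. k < N \<and> hlp k \<noteq> None}. 1 / R k (the (hlp k)) + 1 / Rd (the (hlp k))))"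
  proof -
    have "(\<Sum>k<N. travel_time R Rd hlp k) = (\<Sum>k<N. if hlp k = None then 1 / Rd k else 1 / R k (the (hlp k)) + 1 / Rd (the (hlp k)))"
      by (rule sum.cong) (auto simp: travel_time_def split: option.split)
    also have "\<dots> = (\<Sum>k\<in>{k. k < N \<and> hlp k = None}. 1 / Rd k)
                + (\<Sum>k\<in>{k. k < N \<and> hlp k \<noteq> None}. 1 / R k (the (hlp k)) + 1 / Rd (the (hlp k)))"
      by (subst sum.If_cases) (auto intro!: arg_cong2[where f="(+)"] sum.cong)
    finally show ?thesis unfolding coop_S_def by simp
  qed
  have ev: "\<forall>\<^sub>F \<sigma> in at_right 0. 0 < \<sigma> \<and> 0 < c * sqrt \<sigma> \<and> c * sqrt \<sigma> < 1"
  proof -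
    have "\<forall>\<^sub>F \<sigma> in at_right 0. \<sigma> \<in> {0<..<(1/c)^2}"
      by (rule eventually_at_right_real) (use c_pos in simp)
    then show ?thesis
    proof (rule eventually_mono)
      fix \<sigma> :: real assume s: "\<sigma> \<in> {0<..<(1/c)^2}"
      then have "sqrt \<sigma> < sqrt ((1/c)^2)" by (intro real_sqrt_less_mono) auto
      also have "\<dots> = 1 / c" using c_pos by simp
      finally have "c * sqrt \<sigma> < 1" using c_pos by (simp add: field_simps)
      then show "0 < \<sigma> \<and> 0 < c * sqrt \<sigma> \<and> c * sqrt \<sigma> < 1" using s c_pos by auto
    qed
  qed
  have netI: "0 < \<sigma> \<and> 0 < c * sqrt \<sigma> \<and> c * sqrt \<sigma> < 1 \<Longrightarrow> net N R Rd hlp \<sigma> (c * sqrt \<sigma>)" for \<sigma>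
    unfolding net_def using rates_pos(2) Rpos hN helpers_direct by blast
  have main: "\<forall>\<^sub>F \<sigma> in at_right 0. \<exists>D.
       \<sigma> * (1 - c * sqrt \<sigma>) ^ N + c * sqrt \<sigma> * (1 - c * sqrt \<sigma>) ^ (N - 1) * Tt \<le> D
     \<and> D \<le> \<sigma> * (1 - c * sqrt \<sigma>) ^ N + c * sqrt \<sigma> * (1 - c * sqrt \<sigma>) ^ (N - 1) * Tt
            + (1 - (1 - c * sqrt \<sigma>) ^ N - c * sqrt \<sigma> * (1 - c * sqrt \<sigma>) ^ (N - 1) * real N) * Tt
     \<and> (\<forall>k<N. convergent (thr_seq N R Rd hlp \<sigma> (c * sqrt \<sigma>) k) \<and> convergent (txfrac_seq N R Rd hlp \<sigma> (c * sqrt \<sigma>) k)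
        \<and> fair_S N R Rd hlp \<sigma> (c * sqrt \<sigma>) k = c * sqrt \<sigma> * (1 - c * sqrt \<sigma>) ^ (N - 1) / D
        \<and> (\<forall>E. fair_B N R Rd hlp E \<sigma> (c * sqrt \<sigma>) k = E * (c * sqrt \<sigma> * ((1 + real (num_helped N hlp k)) * u_rate R Rd hlp k)) / (c * sqrt \<sigma> * (1 - c * sqrt \<sigma>) ^ (N - 1))))"
    using ev by eventually_elim (unfold Tt_def, rule net.net_explicit[OF netI])
  have part2: "(\<forall>\<^sub>F \<sigma> in at_right 0. convergent (thr_seq N R Rd hlp \<sigma> (c * sqrt \<sigma>) k)
                                   \<and> convergent (txfrac_seq N R Rd hlp \<sigma> (c * sqrt \<sigma>) k))
          \<and> ((\<lambda>\<sigma>. fair_S N R Rd hlp \<sigma> (c * sqrt \<sigma>) k) \<longlongrightarrow> coop_S N R Rd hlp) (at_right 0)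
          \<and> ((\<lambda>\<sigma>. fair_B N R Rd hlp \<E> \<sigma> (c * sqrt \<sigma>) k) \<longlongrightarrow> coop_B N R Rd hlp \<E> k) (at_right 0)"
    if k: "k < N" for k
  proof (intro conjI)
    show "\<forall>\<^sub>F \<sigma> in at_right 0. convergent (thr_seq N R Rd hlp \<sigma> (c * sqrt \<sigma>) k)
                                   \<and> convergent (txfrac_seq N R Rd hlp \<sigma> (c * sqrt \<sigma>) k)"
      using main by eventually_elim (use k in blast)
    have Ttpos: "Tt > 0" unfolding Tt_def
      by (rule sum_pos) (use k travel_pos[OF rates_pos helpers] in auto)
    have sq: "((\<lambda>\<sigma>. sqrt \<sigma>) \<longlongrightarrow> 0) (at_right 0)"
      using tendsto_real_sqrt[OF tendsto_ident_at[of 0 "{0<..}"]] by simp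
    have t0: "((\<lambda>\<sigma>. 1 - c * sqrt \<sigma>) \<longlongrightarrow> 1) (at_right 0)"
      using tendsto_diff[OF tendsto_const tendsto_mult[OF tendsto_const sq], of 1 c] by simp
    have A: "((\<lambda>\<sigma>. sqrt \<sigma> / c * ((1 - c * sqrt \<sigma>) ^ N / (1 - c * sqrt \<sigma>) ^ (N - 1))) \<longlongrightarrow> 0 / c * (1 ^ N / 1 ^ (N - 1))) (at_right 0)"
      by (intro tendsto_intros sq t0) (use c_pos in auto)
    have B: "((\<lambda>\<sigma>. ((\<Sum>i<N. (1 - c * sqrt \<sigma>) ^ i) - real N * (1 - c * sqrt \<sigma>) ^ (N - 1)) / (1 - c * sqrt \<sigma>) ^ (N - 1))
              \<longlongrightarrow> ((\<Sum>i<N. 1 ^ i) - real N * 1 ^ (N - 1)) / 1 ^ (N - 1)) (at_right 0)"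
      by (intro tendsto_intros t0) auto
    define lo where "lo \<sigma> = sqrt \<sigma> / c * ((1 - c * sqrt \<sigma>) ^ N / (1 - c * sqrt \<sigma>) ^ (N - 1)) + Tt" for \<sigma>
    define hi where "hi \<sigma> = sqrt \<sigma> / c * ((1 - c * sqrt \<sigma>) ^ N / (1 - c * sqrt \<sigma>) ^ (N - 1)) + Tt
        + ((\<Sum>i<N. (1 - c * sqrt \<sigma>) ^ i) - real N * (1 - c * sqrt \<sigma>) ^ (N - 1)) / (1 - c * sqrt \<sigma>) ^ (N - 1) * Tt" for \<sigma>
    have lo_lim: "(lo \<longlongrightarrow> Tt) (at_right 0)"
      using tendsto_add[OF A tendsto_const[of Tt]] by (simp add: lo_def[abs_def])
    have hi_lim: "(hi \<longlongrightarrow> Tt) (at_right 0)"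
      using tendsto_add[OF tendsto_add[OF A tendsto_const[of Tt]] tendsto_mult[OF B tendsto_const[of Tt]]]
      by (simp add: hi_def[abs_def])
    have bnds: "\<forall>\<^sub>F \<sigma> in at_right 0. lo \<sigma> \<le> 1 / fair_S N R Rd hlp \<sigma> (c * sqrt \<sigma>) k \<and> 1 / fair_S N R Rd hlp \<sigma> (c * sqrt \<sigma>) k \<le> hi \<sigma>
          \<and> fair_B N R Rd hlp \<E> \<sigma> (c * sqrt \<sigma>) k = \<E> * ((1 + real (num_helped N hlp k)) * u_rate R Rd hlp k) / (1 - c * sqrt \<sigma>) ^ (N - 1)"
      using main ev
    proof eventually_elim
      case (elim \<sigma>)
      define t where "t = c * sqrt \<sigma>"
      have s: "0 < \<sigma>" "0 < t" "t < 1" using elim(2) by (auto simp: t_def)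
      define X where "X = (1 - t) ^ N"
      define Y where "Y = (1 - t) ^ (N - 1)"
      define W where "W = (\<Sum>i<N. (1 - t) ^ i)"
      have Y: "0 < Y" using s by (simp add: Y_def)
      have st: "\<sigma> / t = sqrt \<sigma> / c" unfolding t_def by (rule alg_sq) (use s c_pos in auto)
      obtain D where D: "\<sigma> * X + t * Y * Tt \<le> D"
          "D \<le> \<sigma> * X + t * Y * Tt + (1 - X - t * Y * real N) * Tt"
          "fair_S N R Rd hlp \<sigma> t k = t * Y / D"
          "fair_B N R Rd hlp \<E> \<sigma> t k = \<E> * (t * ((1 + real (num_helped N hlp k)) * u_rate R Rd hlp k)) / (t * Y)"
        using elim(1) k unfolding t_def[symmetric] X_def[symmetric] Y_def[symmetric] by blast
      have tY: "0 < t * Y" using s Y by simp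
      have inv: "1 / fair_S N R Rd hlp \<sigma> t k = D / (t * Y)" using D(3) by simp
      have Z: "(1 - X - t * Y * real N) / (t * Y) = (W - real N * Y) / Y"
        by (rule alg_Z[OF s(2) Y]) (unfold X_def Y_def W_def, rule diffpow)
      have lo_eq: "lo \<sigma> = (\<sigma> * X + t * Y * Tt) / (t * Y)"
        unfolding alg_lo[OF s(2) Y] st unfolding lo_def t_def[symmetric] X_def Y_def ..
      have hi_eq: "hi \<sigma> = (\<sigma> * X + t * Y * Tt + (1 - X - t * Y * real N) * Tt) / (t * Y)"
        unfolding alg_hi[OF s(2) Y] st Z unfolding hi_def t_def[symmetric] X_def Y_def W_def ..
      have "lo \<sigma> \<le> D / (t * Y)" unfolding lo_eq using D(1) tY by (rule divide_right_mono[OF _ less_imp_le])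
      moreover have "D / (t * Y) \<le> hi \<sigma>" unfolding hi_eq using D(2) tY by (rule divide_right_mono[OF _ less_imp_le])
      moreover have "fair_B N R Rd hlp \<E> \<sigma> t k = \<E> * ((1 + real (num_helped N hlp k)) * u_rate R Rd hlp k) / Y"
        unfolding D(4) using s by simp
      ultimately show ?case unfolding t_def[symmetric] inv Y_def by simp
    qed
    have invlim: "((\<lambda>\<sigma>. 1 / fair_S N R Rd hlp \<sigma> (c * sqrt \<sigma>) k) \<longlongrightarrow> Tt) (at_right 0)"
      by (rule tendsto_sandwich[OF _ _ lo_lim hi_lim]) (use bnds in \<open>eventually_elim, auto\<close>)+
    have "((\<lambda>\<sigma>. 1 / (1 / fair_S N R Rd hlp \<sigma> (c * sqrt \<sigma>) k)) \<longlongrightarrow> 1 / Tt) (at_right 0)"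
      by (rule tendsto_divide[OF tendsto_const invlim]) (use Ttpos in simp)
    then show "((\<lambda>\<sigma>. fair_S N R Rd hlp \<sigma> (c * sqrt \<sigma>) k) \<longlongrightarrow> coop_S N R Rd hlp) (at_right 0)"
      by (simp add: coop_S_def Tt_def)
    have "((\<lambda>\<sigma>. \<E> * ((1 + real (num_helped N hlp k)) * u_rate R Rd hlp k) / (1 - c * sqrt \<sigma>) ^ (N - 1))
          \<longlongrightarrow> \<E> * ((1 + real (num_helped N hlp k)) * u_rate R Rd hlp k) / 1 ^ (N - 1)) (at_right 0)"
      by (intro tendsto_intros t0) auto
    then have "((\<lambda>\<sigma>. fair_B N R Rd hlp \<E> \<sigma> (c * sqrt \<sigma>) k) \<longlongrightarrow> \<E> * ((1 + real (num_helped N hlp k)) * u_rate R Rd hlp k) / 1 ^ (N - 1)) (at_right 0)"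
      by (rule Lim_transform_eventually) (use bnds in \<open>eventually_elim, auto\<close>)
    then show "((\<lambda>\<sigma>. fair_B N R Rd hlp \<E> \<sigma> (c * sqrt \<sigma>) k) \<longlongrightarrow> coop_B N R Rd hlp \<E> k) (at_right 0)"
      by (simp add: coop_B_def algebra_simps)
  qed
  show ?thesis using part1 part2 by (simp add: coop_B_def)
qed


end
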